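(* Let $n=3$, let $S\subset\mathbb{R}^3$ be a smooth cylinder surface with axis vector $e$, and let $q(t)=(A(t),a(t))$ satisfy the constrained Newton's equation for the rolling motion on $S$ of the particle of radius $r$, mass $m$, mass distribution parameter $\gamma$, subject to the constant force $-mge$; write $\dot q=(UA,u)$ and define the angular velocity vector $\omega$ by $Ux=\omega\times x$ for all $x\in\mathbb{R}^3$. Then $\omega\cdot e$ is constant in $t$ and $$\frac{d}{dt}(u\cdot e)+\frac{\gamma^2}{1+\gamma^2}r^2\lambda(a)(\omega\cdot e)(\omega\cdot\nu_a)+\frac{g}{1+\gamma^2}=0,\qquad \frac{d}{dt}(\omega\cdot\nu_a)=\lambda(a)(\omega\cdot e)(u\cdot e).$$ Consequently the height $h=a\cdot e$ of the center of mass (for which $\dot h=u\cdot e$) satisfies, with $\omega_e=\omega\cdot e$ and $\omega_\nu=\omega\cdot\nu_a$, $$\ddot h+\frac{\gamma^2}{1+\gamma^2}r^2\lambda(a)\omega_e(0)\Big[\omega_\nu(0)+\omega_e(0)\int_0^t\lambda(a(s))\dot h(s)\,ds\Big]+\frac{g}{1+\gamma^2}=0.$$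
   Context: The particle is a ball of radius $r>0$ with rotationally symmetric mass distribution of total mass $m$ and second-moment matrix per unit mass $\lambda I$, $\lambda=(r\gamma)^2/2$, $\gamma>0$. $S$ is the surface of positions of the particle's center, $\nu_a$ its inward unit normal at $a$, $\tau_a=\nu_a\times e$, and $\lambda(a)$ the principal curvature of $S$ at $a$ in direction $\tau_a$ (i.e. $\mathbb{S}_a\tau_a=\lambda(a)\tau_a$, where the shape operator is $\mathbb{S}_av=-D_v\nu$). On $M=SO(3)\times S$ use the kinetic energy metric $\langle(U_\xi A,u_\xi),(U_\eta A,u_\eta)\rangle=m\{\tfrac{(r\gamma)^2}{2}\mathrm{Tr}(U_\xi U_\eta^\dagger)+u_\xi\cdot u_\eta\}$ with Levi-Civita connection $\nabla$; for $\dot q=(UA,u)$ one has $\frac{\nabla\dot q}{dt}=(\dot UA,\frac{Du}{dt})$, $D$ the Levi-Civita connection of $S$. The no-slip space at $q=(A,a)$ is $\mathfrak{S}_q=\{(UA,u):u=rU\nu_a\}$ and $\mathfrak{S}^\perp_q$ is its orthogonal complement inside $T_qM$. A path satisfies the constrained Newton's equation with force $f=(0,-mge)$ if $\dot q(t)\in\mathfrak{S}_{q(t)}$ for all $t$ and $\frac{\nabla\dot q}{dt}=m^{-1}f+N$ with $N(t)\in\mathfrak{S}^\perp_{q(t)}$. *)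

theory Defs
  imports "HOL-Analysis.Analysis"
begin

text \<open>The surface S is the regular zero set of phi : R^3 -> R, whose gradient is the
  function Phi.  The unit normal field (orientation fixed by the sign of phi).\<close>
definition unorm :: "(real^3 \<Rightarrow> real^3) \<Rightarrow> real^3 \<Rightarrow> real^3" where
  "unorm Phi x = (1 / norm (Phi x)) *\<^sub>R Phi x"

definition shape_op :: "(real^3 \<Rightarrow> real^3) \<Rightarrow> real^3 \<Rightarrow> real^3 \<Rightarrow> real^3" where
  "shape_op Phi a v = - vector_derivative (\<lambda>s. unorm Phi (a + s *\<^sub>R v)) (at 0)"

definition tau_dir :: "(real^3 \<Rightarrow> real^3) \<Rightarrow> real^3 \<Rightarrow> real^3 \<Rightarrow> real^3" where
  "tau_dir Phi e a = cross3 (unorm Phi a) e"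

definition curv :: "(real^3 \<Rightarrow> real^3) \<Rightarrow> real^3 \<Rightarrow> real^3 \<Rightarrow> real" where
  "curv Phi e a = (THE l. shape_op Phi a (tau_dir Phi e a) = l *\<^sub>R tau_dir Phi e a)"

definition skew :: "real^3^3 \<Rightarrow> bool" where
  "skew W \<longleftrightarrow> transpose W = - W"

definition tangentM :: "(real^3 \<Rightarrow> real^3) \<Rightarrow> real^3^3 \<Rightarrow> real^3 \<Rightarrow> ((real^3^3) \<times> (real^3)) set" where
  "tangentM Phi A a = {(X, w). (\<exists>W. skew W \<and> X = W ** A) \<and> w \<bullet> unorm Phi a = 0}"

definition kin_metric :: "real \<Rightarrow> real \<Rightarrow> real \<Rightarrow> ((real^3^3) \<times> (real^3)) \<Rightarrow> ((real^3^3) \<times> (real^3)) \<Rightarrow> real" where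
  "kin_metric m r \<gamma> p q =
     m * ((r * \<gamma>)\<^sup>2 / 2 * trace (fst p ** transpose (fst q)) + snd p \<bullet> snd q)"

definition noslip :: "(real^3 \<Rightarrow> real^3) \<Rightarrow> real \<Rightarrow> real^3^3 \<Rightarrow> real^3 \<Rightarrow> ((real^3^3) \<times> (real^3)) set" where
  "noslip Phi r A a = {p \<in> tangentM Phi A a.
      \<exists>U. skew U \<and> fst p = U ** A \<and> snd p = r *\<^sub>R (U *v unorm Phi a)}"

definition noslip_perp :: "(real^3 \<Rightarrow> real^3) \<Rightarrow> real \<Rightarrow> real \<Rightarrow> real \<Rightarrow> real^3^3 \<Rightarrow> real^3 \<Rightarrow> ((real^3^3) \<times> (real^3)) set" where
  "noslip_perp Phi m r \<gamma> A a = {p \<in> tangentM Phi A a.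
      \<forall>z \<in> noslip Phi r A a. kin_metric m r \<gamma> p z = 0}"

text \<open>Covariant derivative Du/dt on S: tangential part of the ambient derivative.\<close>
definition covD :: "(real^3 \<Rightarrow> real^3) \<Rightarrow> real^3 \<Rightarrow> real^3 \<Rightarrow> real^3" where
  "covD Phi a du = du - (du \<bullet> unorm Phi a) *\<^sub>R unorm Phi a"

definition angvel :: "real^3^3 \<Rightarrow> real^3" where
  "angvel U = (THE w. \<forall>x. U *v x = cross3 w x)"

end

theory Submission imports Defs begin

definition vecof :: "real^3^3 \<Rightarrow> real^3" where
  "vecof U = vector [(U$3$2 - U$2$3)/2, (U$1$3 - U$3$1)/2, (U$2$1 - U$1$2)/2]"

definition skewmat :: "real^3 \<Rightarrow> real^3^3" where
  "skewmat w = vector [vector [0, -(w$3), w$2], vector [w$3, 0, -(w$1)], vector [-(w$2), w$1, 0]]"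

lemma forall3: "(\<forall>i::3. P i) \<longleftrightarrow> P 1 \<and> P 2 \<and> P 3"
  by (metis exhaust_3)

lemma skew_apply: assumes "skew U" shows "U *v x = cross3 (vecof U) x"
proof -
  have s: "U$i$j = - U$j$i" for i j
  proof -
    have "(transpose U)$j$i = (-U)$j$i" using assms unfolding skew_def by simp
    then show ?thesis by (simp add: transpose_def)
  qed
  have d1: "U$1$1 = 0" "U$2$2 = 0" "U$3$3 = 0" using s[of 1 1] s[of 2 2] s[of 3 3] by linarith+
  have v: "vecof U = vector [U$3$2, U$1$3, U$2$1]"
    unfolding vecof_def using s[of 2 3] s[of 3 1] s[of 1 2] by simp
  have c: "(U *v x)$1 = U$1$2 * x$2 + U$1$3 * x$3" "(U *v x)$2 = U$2$1 * x$1 + U$2$3 * x$3" "(U *v x)$3 = U$3$1 * x$1 + U$3$2 * x$2"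
    unfolding matrix_vector_mult_def by (simp_all add: sum_3 d1)
  show ?thesis unfolding v
    apply (simp only: vec_eq_iff forall3 c)
    apply (simp add: cross3_def vector_def s[of 1 2] s[of 3 1] s[of 2 3] algebra_simps)
    done
qed

lemma cross_eq_imp: assumes "\<forall>x. cross3 w x = cross3 w' x" shows "w = w'"
proof -
  have "cross3 w (axis 1 1) = cross3 w' (axis 1 1)" "cross3 w (axis 2 1) = cross3 w' (axis 2 1)"
    using assms by auto
  then have "w$1 = w'$1" "w$2 = w'$2" "w$3 = w'$3"
    unfolding cross3_def by (simp_all add: vec_eq_iff forall3 axis_def)
  then show ?thesis by (simp add: vec_eq_iff forall3)
qed

lemma angvel_skew: assumes "skew U" shows "angvel U = vecof U"
  unfolding angvel_def
proof (rule the_equality)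
  show "\<forall>x. U *v x = cross3 (vecof U) x" using skew_apply[OF assms] by simp
  fix w assume "\<forall>x. U *v x = cross3 w x"
  then show "w = vecof U" using cross_eq_imp skew_apply[OF assms] by metis
qed

lemma skew_skewmat: "skew (skewmat w)"
  unfolding skew_def skewmat_def transpose_def
  by (simp add: vec_eq_iff forall3 vector_def)

lemma skewmat_apply: "skewmat w *v x = cross3 w x"
  unfolding skewmat_def cross3_def matrix_vector_mult_def
  by (simp add: vec_eq_iff forall3 sum_3 vector_def algebra_simps)

lemma trace_skewmat: "trace (M ** transpose (skewmat w)) = 2 * (vecof M \<bullet> w)"
  unfolding skewmat_def vecof_def trace_def transpose_def matrix_matrix_mult_def
  by (simp add: sum_3 vector_def inner_vec_def algebra_simps add_divide_distrib diff_divide_distrib)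

lemma linear_vecof: "linear vecof"
  by (rule linearI) (simp_all add: vecof_def vec_eq_iff forall3 vector_def algebra_simps diff_divide_distrib add_divide_distrib)

lemma lagrange: "cross3 a b \<bullet> cross3 c d = (a \<bullet> c) * (b \<bullet> d) - (a \<bullet> d) * (b \<bullet> c)" for a b c d :: "real^3"
  by (simp add: cross3_simps) 

lemma triple1: "cross3 a (cross3 b c) = (a \<bullet> c) *\<^sub>R b - (a \<bullet> b) *\<^sub>R c" for a b c :: "real^3"
  by (simp add: cross3_simps forall3)
lemma triple2: "cross3 (cross3 a b) c = (a \<bullet> c) *\<^sub>R b - (b \<bullet> c) *\<^sub>R a" for a b c :: "real^3"
  by (simp add: cross3_simps forall3)
lemma triple_scalar: "cross3 a b \<bullet> c = a \<bullet> cross3 b c" for a b c :: "real^3"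
  by (simp add: cross3_simps)

definition Lop :: "(real^3 \<Rightarrow> real^3) \<Rightarrow> (real^3 \<Rightarrow> ((real^3) \<Rightarrow>\<^sub>L (real^3))) \<Rightarrow> real^3 \<Rightarrow> real^3 \<Rightarrow> real^3" where
  "Lop Phi DPhi x v = (1 / norm (Phi x)) *\<^sub>R (blinfun_apply (DPhi x) v)
     - ((Phi x \<bullet> blinfun_apply (DPhi x) v) / norm (Phi x) ^ 3) *\<^sub>R Phi x"

lemma unorm_deriv:
  assumes "Phi x \<noteq> 0" "(Phi has_derivative blinfun_apply (DPhi x)) (at x)"
  shows "(unorm Phi has_derivative Lop Phi DPhi x) (at x)"
proof -
  have n: "norm (Phi x) \<noteq> 0" using assms by simp
  have d1: "((\<lambda>y. norm (Phi y)) has_derivative (\<lambda>h. Phi x \<bullet> blinfun_apply (DPhi x) h / norm (Phi x))) (at x)"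
    using has_derivative_compose[OF assms(2) has_derivative_norm[OF assms(1)]]
    by (simp add: sgn_div_norm inner_commute divide_inverse mult.commute)
  have d2: "((\<lambda>y. 1 / norm (Phi y)) has_derivative (\<lambda>h. - (inverse (norm (Phi x)) * (Phi x \<bullet> blinfun_apply (DPhi x) h / norm (Phi x)) * inverse (norm (Phi x))))) (at x)"
    using Deriv.has_derivative_inverse[OF n d1] by (simp add: inverse_eq_divide)
  have d3: "((\<lambda>y. (1 / norm (Phi y)) *\<^sub>R Phi y) has_derivative
     (\<lambda>h. (1 / norm (Phi x)) *\<^sub>R blinfun_apply (DPhi x) h + (- (inverse (norm (Phi x)) * (Phi x \<bullet> blinfun_apply (DPhi x) h / norm (Phi x)) * inverse (norm (Phi x)))) *\<^sub>R Phi x)) (at x)"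
    by (rule has_derivative_scaleR[OF d2 assms(2)])
  have e: "(\<lambda>h. (1 / norm (Phi x)) *\<^sub>R blinfun_apply (DPhi x) h + (- (inverse (norm (Phi x)) * (Phi x \<bullet> blinfun_apply (DPhi x) h / norm (Phi x)) * inverse (norm (Phi x)))) *\<^sub>R Phi x) = Lop Phi DPhi x"
    by (rule ext) (simp add: Lop_def power3_eq_cube divide_inverse mult.assoc mult.commute mult.left_commute)
  show ?thesis using d3 unfolding e unorm_def[abs_def] .
qed


lemma lin_inner_eq: "(\<lambda>h. a \<bullet> h) = (\<lambda>h. b \<bullet> h) \<Longrightarrow> a = (b::real^3)"
  by (metis inner_commute vector_eq)

lemma G1:
  assumes grad: "\<And>x. (\<phi> has_derivative (\<lambda>h. Phi x \<bullet> h)) (at x)"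
    and cyl: "\<And>x s. \<phi> (x + s *\<^sub>R e) = \<phi> x"
  shows "Phi x \<bullet> e = 0"
proof -
  have d: "((\<lambda>s::real. x + s *\<^sub>R e) has_derivative (\<lambda>h. h *\<^sub>R e)) (at 0)"
    by (auto intro!: derivative_eq_intros)
  have "((\<lambda>s. \<phi> (x + s *\<^sub>R e)) has_derivative (\<lambda>h. Phi (x + 0 *\<^sub>R e) \<bullet> (h *\<^sub>R e))) (at 0)"
    by (rule has_derivative_compose[OF d grad])
  then have "((\<lambda>s::real. \<phi> x) has_derivative (\<lambda>h. h * (Phi x \<bullet> e))) (at 0)"
    by (simp add: cyl)
  moreover have "((\<lambda>s::real. \<phi> x) has_derivative (\<lambda>h. 0)) (at 0)" by simp
  ultimately have "(\<lambda>h::real. h * (Phi x \<bullet> e)) = (\<lambda>h. 0)" by (rule has_derivative_unique)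
  then show ?thesis by (metis mult_1)
qed

lemma G2:
  assumes grad: "\<And>x. (\<phi> has_derivative (\<lambda>h. Phi x \<bullet> h)) (at x)"
    and cyl: "\<And>x s. \<phi> (x + s *\<^sub>R e) = \<phi> x"
  shows "Phi (x + s *\<^sub>R e) = Phi x"
proof -
  have d: "((\<lambda>y. y + s *\<^sub>R e) has_derivative (\<lambda>h. h)) (at x)"
    by (auto intro!: derivative_eq_intros)
  have "((\<lambda>y. \<phi> (y + s *\<^sub>R e)) has_derivative (\<lambda>h. Phi (x + s *\<^sub>R e) \<bullet> h)) (at x)"
    by (rule has_derivative_compose[OF d grad])
  then have "(\<phi> has_derivative (\<lambda>h. Phi (x + s *\<^sub>R e) \<bullet> h)) (at x)"
    by (simp add: cyl)
  from has_derivative_unique[OF this grad] show ?thesis by (metis inner_commute vector_eq)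
qed

lemma G3:
  assumes grad: "\<And>x. (\<phi> has_derivative (\<lambda>h. Phi x \<bullet> h)) (at x)"
    and cyl: "\<And>x s. \<phi> (x + s *\<^sub>R e) = \<phi> x"
    and hess: "\<And>x. (Phi has_derivative blinfun_apply (DPhi x)) (at x)"
  shows "blinfun_apply (DPhi x) h \<bullet> e = 0"
proof -
  have "((\<lambda>y. Phi y \<bullet> e) has_derivative (\<lambda>h. blinfun_apply (DPhi x) h \<bullet> e)) (at x)"
    by (auto intro!: derivative_eq_intros hess)
  moreover have "(\<lambda>y. Phi y \<bullet> e) = (\<lambda>y. 0)" using G1[OF grad cyl] by auto
  ultimately have "((\<lambda>y. 0::real) has_derivative (\<lambda>h. blinfun_apply (DPhi x) h \<bullet> e)) (at x)" by simp
  from has_derivative_unique[OF this has_derivative_const] show ?thesis by metis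
qed

lemma G4:
  assumes grad: "\<And>x. (\<phi> has_derivative (\<lambda>h. Phi x \<bullet> h)) (at x)"
    and cyl: "\<And>x s. \<phi> (x + s *\<^sub>R e) = \<phi> x"
    and hess: "\<And>x. (Phi has_derivative blinfun_apply (DPhi x)) (at x)"
  shows "blinfun_apply (DPhi x) e = 0"
proof -
  have d: "((\<lambda>s::real. x + s *\<^sub>R e) has_derivative (\<lambda>h. h *\<^sub>R e)) (at 0)"
    by (auto intro!: derivative_eq_intros)
  have "((\<lambda>s. Phi (x + s *\<^sub>R e)) has_derivative (\<lambda>h. blinfun_apply (DPhi (x + 0 *\<^sub>R e)) (h *\<^sub>R e))) (at 0)"
    by (rule has_derivative_compose[OF d hess])
  then have "((\<lambda>s::real. Phi x) has_derivative (\<lambda>h. h *\<^sub>R blinfun_apply (DPhi x) e)) (at 0)"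
    by (simp add: G2[OF grad cyl] blinfun.scaleR_right)
  from has_derivative_unique[OF this has_derivative_const] have "(\<lambda>h::real. h *\<^sub>R blinfun_apply (DPhi x) e) = (\<lambda>h. 0)" .
  then show ?thesis by (metis scaleR_one)
qed


lemma tau_unit:
  fixes n e :: "real^3"
  assumes "n \<bullet> n = 1" "e \<bullet> e = 1" "n \<bullet> e = 0"
  shows "cross3 n e \<bullet> cross3 n e = 1"
  using lagrange[of n e n e] assms by (simp add: inner_commute)

lemma cross_lin: "cross3 a (c *\<^sub>R b - d *\<^sub>R f) = c *\<^sub>R cross3 a b - d *\<^sub>R cross3 a f"
  by (simp add: cross3_simps forall3)

lemma decomp3:
  fixes n e x :: "real^3"
  assumes nn: "n \<bullet> n = 1" and ee: "e \<bullet> e = 1" and ne: "n \<bullet> e = 0"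
  shows "x = (x \<bullet> n) *\<^sub>R n + (x \<bullet> cross3 n e) *\<^sub>R cross3 n e + (x \<bullet> e) *\<^sub>R e"
proof -
  define t where "t = cross3 n e"
  have tt: "t \<bullet> t = 1" unfolding t_def using tau_unit[OF assms] .
  have a: "cross3 t (cross3 x t) = x - (t \<bullet> x) *\<^sub>R t" using triple1[of t x t] tt by simp
  have b: "cross3 x t = (x \<bullet> e) *\<^sub>R n - (x \<bullet> n) *\<^sub>R e" unfolding t_def using triple1[of x n e] by simp
  have c: "cross3 t n = e" unfolding t_def using triple2[of n e n] nn ne by (simp add: inner_commute)
  have d: "cross3 t e = - n" unfolding t_def using triple2[of n e e] ee ne by (simp add: inner_commute)
  have "cross3 t (cross3 x t) = (x \<bullet> e) *\<^sub>R e + (x \<bullet> n) *\<^sub>R n"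
    unfolding b cross_lin c d by simp
  with a have "x = (t \<bullet> x) *\<^sub>R t + (x \<bullet> e) *\<^sub>R e + (x \<bullet> n) *\<^sub>R n"
    by (metis add.assoc diff_add_cancel add.commute)
  then show ?thesis unfolding t_def by (simp add: inner_commute algebra_simps)
qed

lemma P1:
  assumes grad: "\<And>x. (\<phi> has_derivative (\<lambda>h. Phi x \<bullet> h)) (at x)"
    and cyl: "\<And>x s. \<phi> (x + s *\<^sub>R e) = \<phi> x"
    and nz: "Phi a \<noteq> 0"
  shows "unorm Phi a \<bullet> unorm Phi a = 1" "unorm Phi a \<bullet> e = 0"
  using nz G1[OF grad cyl, of a]
  by (simp_all add: unorm_def inner_commute power2_norm_eq_inner[symmetric] power2_eq_square)

lemma Lop_props:
  assumes grad: "\<And>x. (\<phi> has_derivative (\<lambda>h. Phi x \<bullet> h)) (at x)"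
    and cyl: "\<And>x s. \<phi> (x + s *\<^sub>R e) = \<phi> x"
    and hess: "\<And>x. (Phi has_derivative blinfun_apply (DPhi x)) (at x)"
    and nz: "Phi a \<noteq> 0"
  shows "Lop Phi DPhi a v \<bullet> unorm Phi a = 0"
    "Lop Phi DPhi a v \<bullet> e = 0"
    "Lop Phi DPhi a e = 0"
    "Lop Phi DPhi a (c *\<^sub>R v + d *\<^sub>R w) = c *\<^sub>R Lop Phi DPhi a v + d *\<^sub>R Lop Phi DPhi a w"
proof -
  have n: "norm (Phi a) \<noteq> 0" using nz by simp
  have pp: "Phi a \<bullet> Phi a = norm (Phi a) ^ 2" by (simp add: power2_norm_eq_inner)
  have "Lop Phi DPhi a v \<bullet> Phi a = (1 / norm (Phi a)) * (blinfun_apply (DPhi a) v \<bullet> Phi a)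
      - ((Phi a \<bullet> blinfun_apply (DPhi a) v) / norm (Phi a) ^ 3) * (Phi a \<bullet> Phi a)"
    by (simp add: Lop_def inner_diff_left)
  also have "\<dots> = 0" using n by (simp add: pp inner_commute power3_eq_cube power2_eq_square)
  finally show "Lop Phi DPhi a v \<bullet> unorm Phi a = 0" by (simp add: unorm_def)
  show "Lop Phi DPhi a v \<bullet> e = 0"
    unfolding Lop_def using G1[OF grad cyl, of a] G3[OF grad cyl hess, of a v]
    by (simp add: inner_diff_left)
  show "Lop Phi DPhi a e = 0"
    unfolding Lop_def using G4[OF grad cyl hess, of a] by simp
  show "Lop Phi DPhi a (c *\<^sub>R v + d *\<^sub>R w) = c *\<^sub>R Lop Phi DPhi a v + d *\<^sub>R Lop Phi DPhi a w"
    unfolding Lop_def by (simp add: blinfun.add_right blinfun.scaleR_right inner_add_right algebra_simps add_divide_distrib)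
qed


lemma shape_Lop:
  assumes hess: "\<And>x. (Phi has_derivative blinfun_apply (DPhi x)) (at x)"
    and nz: "Phi a \<noteq> 0"
  shows "shape_op Phi a v = - Lop Phi DPhi a v"
proof -
  have d: "((\<lambda>s::real. a + s *\<^sub>R v) has_derivative (\<lambda>h. h *\<^sub>R v)) (at 0)"
    by (auto intro!: derivative_eq_intros)
  have "((\<lambda>s. unorm Phi (a + s *\<^sub>R v)) has_derivative (\<lambda>h. Lop Phi DPhi (a + 0 *\<^sub>R v) (h *\<^sub>R v))) (at 0)"
    by (rule has_derivative_compose[OF d unorm_deriv]) (use nz hess in auto)
  moreover have "Lop Phi DPhi a (h *\<^sub>R v) = h *\<^sub>R Lop Phi DPhi a v" for h
    by (simp add: Lop_def blinfun.scaleR_right algebra_simps)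
  ultimately have "((\<lambda>s. unorm Phi (a + s *\<^sub>R v)) has_vector_derivative Lop Phi DPhi a v) (at 0)"
    by (simp add: has_vector_derivative_def)
  then show ?thesis unfolding shape_op_def by (simp add: vector_derivative_at)
qed

lemma curv_Lop:
  assumes grad: "\<And>x. (\<phi> has_derivative (\<lambda>h. Phi x \<bullet> h)) (at x)"
    and cyl: "\<And>x s. \<phi> (x + s *\<^sub>R e) = \<phi> x"
    and hess: "\<And>x. (Phi has_derivative blinfun_apply (DPhi x)) (at x)"
    and e: "norm e = 1"
    and nz: "Phi a \<noteq> 0"
  shows "curv Phi e a = - (Lop Phi DPhi a (tau_dir Phi e a) \<bullet> tau_dir Phi e a)"
proof -
  define n where "n = unorm Phi a"
  define t where "t = tau_dir Phi e a"
  have t: "t = cross3 n e" unfolding t_def n_def tau_dir_def ..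
  have nn: "n \<bullet> n = 1" and ne: "n \<bullet> e = 0" using P1[OF grad cyl nz] unfolding n_def by auto
  have ee: "e \<bullet> e = 1" using e by (simp add: norm_eq_1)
  have tt: "t \<bullet> t = 1" unfolding t using tau_unit[OF nn ee ne] .
  define L where "L = Lop Phi DPhi a t"
  have "L = (L \<bullet> n) *\<^sub>R n + (L \<bullet> t) *\<^sub>R t + (L \<bullet> e) *\<^sub>R e"
    unfolding t by (rule decomp3[OF nn ee ne])
  moreover have "L \<bullet> n = 0" "L \<bullet> e = 0" unfolding L_def n_def using Lop_props[OF grad cyl hess nz] by auto
  ultimately have L: "L = (L \<bullet> t) *\<^sub>R t" by simp
  have sh: "shape_op Phi a t = (- (L \<bullet> t)) *\<^sub>R t"
    unfolding shape_Lop[OF hess nz] L_def[symmetric] by (subst L) simp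
  have tnz: "t \<noteq> 0" using tt by auto
  show ?thesis unfolding curv_def t_def[symmetric] L_def[symmetric]
  proof (rule the_equality)
    show "shape_op Phi a t = (- (L \<bullet> t)) *\<^sub>R t" by (rule sh)
    fix l assume "shape_op Phi a t = l *\<^sub>R t"
    with sh have "l *\<^sub>R t = (- (L \<bullet> t)) *\<^sub>R t" by simp
    then show "l = - (L \<bullet> t)" using tnz by (metis scaleR_cancel_right scaleR_minus_left)
  qed
qed

lemma Lop_tangent:
  assumes grad: "\<And>x. (\<phi> has_derivative (\<lambda>h. Phi x \<bullet> h)) (at x)"
    and cyl: "\<And>x s. \<phi> (x + s *\<^sub>R e) = \<phi> x"
    and hess: "\<And>x. (Phi has_derivative blinfun_apply (DPhi x)) (at x)"
    and e: "norm e = 1"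
    and nz: "Phi a \<noteq> 0"
    and vn: "v \<bullet> unorm Phi a = 0"
  shows "Lop Phi DPhi a v = - (curv Phi e a * (v \<bullet> tau_dir Phi e a)) *\<^sub>R tau_dir Phi e a"
proof -
  define n where "n = unorm Phi a"
  define t where "t = tau_dir Phi e a"
  have t: "t = cross3 n e" unfolding t_def n_def tau_dir_def ..
  have nn: "n \<bullet> n = 1" and ne: "n \<bullet> e = 0" using P1[OF grad cyl nz] unfolding n_def by auto
  have ee: "e \<bullet> e = 1" using e by (simp add: norm_eq_1)
  define L where "L = Lop Phi DPhi a t"
  have "L = (L \<bullet> n) *\<^sub>R n + (L \<bullet> t) *\<^sub>R t + (L \<bullet> e) *\<^sub>R e"
    unfolding t by (rule decomp3[OF nn ee ne])
  moreover have "L \<bullet> n = 0" "L \<bullet> e = 0" unfolding L_def n_def using Lop_props[OF grad cyl hess nz] by auto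
  ultimately have L: "L = (L \<bullet> t) *\<^sub>R t" by simp
  have "v = (v \<bullet> n) *\<^sub>R n + (v \<bullet> t) *\<^sub>R t + (v \<bullet> e) *\<^sub>R e"
    unfolding t by (rule decomp3[OF nn ee ne])
  then have v: "v = (v \<bullet> t) *\<^sub>R t + (v \<bullet> e) *\<^sub>R e" using vn unfolding n_def by simp
  have "Lop Phi DPhi a v = (v \<bullet> t) *\<^sub>R L + (v \<bullet> e) *\<^sub>R Lop Phi DPhi a e"
    unfolding L_def by (subst v) (rule Lop_props(4)[OF grad cyl hess nz])
  also have "\<dots> = (v \<bullet> t) *\<^sub>R L" using Lop_props(3)[OF grad cyl hess nz] by simp
  also have "\<dots> = ((v \<bullet> t) * (L \<bullet> t)) *\<^sub>R t" by (subst L) simp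
  finally show ?thesis
    using curv_Lop[OF grad cyl hess e nz] unfolding t_def[symmetric] L_def[symmetric] by simp
qed


lemma alg:
  fixes W W' N N' u u' e :: "real^3" and r \<gamma> g lam :: real
  assumes nn: "N \<bullet> N = 1" and ee: "e \<bullet> e = 1" and ne: "N \<bullet> e = 0" and r: "r > 0" and \<gamma>: "\<gamma> > 0"
    and u: "u = r *\<^sub>R cross3 W N"
    and N': "N' = - (lam * (u \<bullet> cross3 N e)) *\<^sub>R cross3 N e"
    and u': "u' = r *\<^sub>R (cross3 W N' + cross3 W' N)"
    and K: "\<And>x. r * \<gamma>\<^sup>2 * (W' \<bullet> x) + (u' + g *\<^sub>R e) \<bullet> cross3 x N = 0"
  shows "W' \<bullet> e = 0"
    and "u' \<bullet> e = - (\<gamma>\<^sup>2 / (1 + \<gamma>\<^sup>2) * r\<^sup>2 * lam * (W \<bullet> e) * (W \<bullet> N) + g / (1 + \<gamma>\<^sup>2))"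
    and "W \<bullet> N' + W' \<bullet> N = lam * (W \<bullet> e) * (u \<bullet> e)"
proof -
  define T where "T = cross3 N e"
  have eT: "e \<bullet> T = 0" unfolding T_def by (simp add: dot_cross_self)
  have TN: "cross3 T N = e" unfolding T_def using triple2[of N e N] nn ne by (simp add: inner_commute)
  have Te: "cross3 T e = - N" unfolding T_def using triple2[of N e e] ee ne by (simp add: inner_commute)
  have eN: "cross3 e N = - T" unfolding T_def by (metis cross_skew)
  have NN: "cross3 N N = 0" by simp
  have uT: "u \<bullet> T = - r * (W \<bullet> e)" unfolding u T_def
    using lagrange[of W N N e] nn ne by (simp add: inner_commute)
  have ue: "u \<bullet> e = r * (W \<bullet> T)" unfolding u T_def by (simp add: triple_scalar)
  define c where "c = - (lam * (u \<bullet> T))"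
  have N'c: "N' = c *\<^sub>R T" unfolding N' c_def T_def ..
  have c: "c = lam * r * (W \<bullet> e)" unfolding c_def uT by simp
  have K1: "W' \<bullet> N = 0" using K[of N] r \<gamma> NN by simp
  have K2: "r * \<gamma>\<^sup>2 * (W' \<bullet> e) - u' \<bullet> T = 0"
  proof -
    have h: "(u' + g *\<^sub>R e) \<bullet> T = u' \<bullet> T" by (simp add: inner_add_left eT)
    show ?thesis using K[of e] unfolding eN inner_minus_right h by simp
  qed
  have K3: "r * \<gamma>\<^sup>2 * (W' \<bullet> T) + (u' \<bullet> e + g) = 0"
    using K[of T] unfolding TN by (simp add: inner_add_left ee)
  have A1: "cross3 W N' \<bullet> T = 0" unfolding N'c by (simp add: cross_mult_right dot_cross_self)
  have A2: "cross3 W' N \<bullet> T = - (W' \<bullet> e)" unfolding T_def using lagrange[of W' N N e] nn ne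
    by (simp add: inner_commute)
  have u'T: "u' \<bullet> T = - r * (W' \<bullet> e)" unfolding u' using A1 A2 by (simp add: inner_add_left)
  have "r * (\<gamma>\<^sup>2 + 1) * (W' \<bullet> e) = 0" using K2 unfolding u'T by (simp add: algebra_simps)
  moreover have "\<gamma>\<^sup>2 + 1 \<noteq> 0" by (metis add_pos_nonneg zero_less_one zero_le_power2 less_irrefl add.commute)
  ultimately show we: "W' \<bullet> e = 0" using r by simp
  have B1: "cross3 W N' \<bullet> e = - c * (W \<bullet> N)" unfolding N'c
    by (simp add: cross_mult_right triple_scalar Te)
  have B2: "cross3 W' N \<bullet> e = W' \<bullet> T" unfolding T_def by (simp add: triple_scalar)
  have u'e: "u' \<bullet> e = r * (- c * (W \<bullet> N)) + r * (W' \<bullet> T)" unfolding u' using B1 B2 by (simp add: inner_add_left algebra_simps)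
  have g2: "\<gamma>\<^sup>2 > 0" using \<gamma> by simp
  have "\<gamma>\<^sup>2 * (u' \<bullet> e) = - \<gamma>\<^sup>2 * r\<^sup>2 * lam * (W \<bullet> e) * (W \<bullet> N) - (u' \<bullet> e + g)"
  proof -
    have "\<gamma>\<^sup>2 * (u' \<bullet> e) = - \<gamma>\<^sup>2 * r * c * (W \<bullet> N) + (r * \<gamma>\<^sup>2 * (W' \<bullet> T))"
      unfolding u'e by (simp add: algebra_simps)
    also have "\<dots> = - \<gamma>\<^sup>2 * r * c * (W \<bullet> N) - (u' \<bullet> e + g)" using K3 by linarith
    finally show ?thesis unfolding c by (simp add: power2_eq_square algebra_simps)
  qed
  then have "(1 + \<gamma>\<^sup>2) * (u' \<bullet> e) = - (\<gamma>\<^sup>2 * r\<^sup>2 * lam * (W \<bullet> e) * (W \<bullet> N) + g)"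
    by (simp add: algebra_simps)
  moreover have "1 + \<gamma>\<^sup>2 > 0" using g2 by linarith
  ultimately have X: "u' \<bullet> e = - (\<gamma>\<^sup>2 * r\<^sup>2 * lam * (W \<bullet> e) * (W \<bullet> N) + g) / (1 + \<gamma>\<^sup>2)"
    by (metis less_irrefl nonzero_mult_div_cancel_left)
  have D: "1 + \<gamma>\<^sup>2 \<noteq> 0" using g2 by linarith
  show "u' \<bullet> e = - (\<gamma>\<^sup>2 / (1 + \<gamma>\<^sup>2) * r\<^sup>2 * lam * (W \<bullet> e) * (W \<bullet> N) + g / (1 + \<gamma>\<^sup>2))"
    unfolding X using D by (simp add: add_divide_distrib diff_divide_distrib)
  have "W \<bullet> N' = c * (W \<bullet> T)" unfolding N'c by simp
  then show "W \<bullet> N' + W' \<bullet> N = lam * (W \<bullet> e) * (u \<bullet> e)"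
    unfolding K1 ue c by (simp add: algebra_simps)
qed


lemma Lop_scale: "Lop Phi DPhi a (h *\<^sub>R v) = h *\<^sub>R Lop Phi DPhi a v"
  by (simp add: Lop_def blinfun.scaleR_right algebra_simps)

theorem theorem4p3:
  fixes \<phi> :: "real^3 \<Rightarrow> real" and Phi :: "real^3 \<Rightarrow> real^3"
    and DPhi :: "real^3 \<Rightarrow> ((real^3) \<Rightarrow>\<^sub>L (real^3))"
    and e :: "real^3" and r m \<gamma> g :: real and J :: "real set"
    and A A' U U' :: "real \<Rightarrow> real^3^3" and a u u' :: "real \<Rightarrow> real^3"
  assumes r: "r > 0" and m: "m > 0" and \<gamma>: "\<gamma> > 0"
    and e: "norm e = 1"
    \<comment> \<open>S = {x. phi x = 0} is a smooth (here: C^2) regular cylinder surface with axis e\<close>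
    and grad: "\<And>x. (\<phi> has_derivative (\<lambda>h. Phi x \<bullet> h)) (at x)"
    and hess: "\<And>x. (Phi has_derivative blinfun_apply (DPhi x)) (at x)"
    and hess_cont: "continuous_on UNIV DPhi"
    and regular: "\<And>x. \<phi> x = 0 \<Longrightarrow> Phi x \<noteq> 0"
    and cyl: "\<And>x s. \<phi> (x + s *\<^sub>R e) = \<phi> x"
    \<comment> \<open>the time interval\<close>
    and J: "open J" "is_interval J" "0 \<in> J"
    \<comment> \<open>the path q(t) = (A(t), a(t)) in M = SO(3) x S, with qdot = (U A, u)\<close>
    and SO3: "\<And>t. t \<in> J \<Longrightarrow> orthogonal_matrix (A t) \<and> det (A t) = 1"
    and onS: "\<And>t. t \<in> J \<Longrightarrow> \<phi> (a t) = 0"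
    and dA: "\<And>t. t \<in> J \<Longrightarrow> (A has_vector_derivative A' t) (at t)"
    and Udef: "\<And>t. t \<in> J \<Longrightarrow> U t = A' t ** transpose (A t)"
    and dU: "\<And>t. t \<in> J \<Longrightarrow> (U has_vector_derivative U' t) (at t)"
    and da: "\<And>t. t \<in> J \<Longrightarrow> (a has_vector_derivative u t) (at t)"
    and du: "\<And>t. t \<in> J \<Longrightarrow> (u has_vector_derivative u' t) (at t)"
    \<comment> \<open>constrained Newton's equation with force f = (0, -m g e)\<close>
    and noslip: "\<And>t. t \<in> J \<Longrightarrow> (U t ** A t, u t) \<in> noslip Phi r (A t) (a t)"
    and newton: "\<And>t. t \<in> J \<Longrightarrow>
        (U' t ** A t - 0, covD Phi (a t) (u' t) - (- g *\<^sub>R e))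
          \<in> noslip_perp Phi m r \<gamma> (A t) (a t)"
  shows "(\<forall>s\<in>J. \<forall>t\<in>J. angvel (U s) \<bullet> e = angvel (U t) \<bullet> e)
    \<and> (\<forall>t\<in>J.
         ((\<lambda>t. u t \<bullet> e) has_real_derivative
            - (\<gamma>\<^sup>2 / (1 + \<gamma>\<^sup>2) * r\<^sup>2 * curv Phi e (a t) * (angvel (U t) \<bullet> e)
                 * (angvel (U t) \<bullet> unorm Phi (a t)) + g / (1 + \<gamma>\<^sup>2))) (at t)
       \<and> ((\<lambda>t. angvel (U t) \<bullet> unorm Phi (a t)) has_real_derivative
            curv Phi e (a t) * (angvel (U t) \<bullet> e) * (u t \<bullet> e)) (at t))
    \<and> (\<forall>t\<in>J.
         ((\<lambda>t. a t \<bullet> e) has_real_derivative (u t \<bullet> e)) (at t)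
       \<and> ((\<lambda>t. u t \<bullet> e) has_real_derivative
            - (\<gamma>\<^sup>2 / (1 + \<gamma>\<^sup>2) * r\<^sup>2 * curv Phi e (a t) * (angvel (U 0) \<bullet> e)
                 * ((angvel (U 0) \<bullet> unorm Phi (a 0))
                    + (angvel (U 0) \<bullet> e) * (LBINT s=0..t. curv Phi e (a s) * (u s \<bullet> e)))
               + g / (1 + \<gamma>\<^sup>2))) (at t))"
proof -
  have ee: "e \<bullet> e = 1" using e by (simp add: norm_eq_1)
  have nz: "Phi (a t) \<noteq> 0" if "t \<in> J" for t using regular onS that by blast
  define n where "n = (\<lambda>s. unorm Phi (a s))"
  define lam where "lam = (\<lambda>s. curv Phi e (a s))"
  define w where "w = (\<lambda>s. angvel (U s))"
  define w' where "w' = (\<lambda>s. vecof (U' s))"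
  define n' where "n' = (\<lambda>s. Lop Phi DPhi (a s) (u s))"
  have nn: "n t \<bullet> n t = 1" and ne: "n t \<bullet> e = 0" if "t \<in> J" for t
    using P1[OF grad cyl nz[OF that]] unfolding n_def by auto
  have skU: "skew (U t) \<and> u t = r *\<^sub>R cross3 (w t) (n t)" if t: "t \<in> J" for t
  proof -
    from noslip[OF t] obtain W where W: "skew W" "U t ** A t = W ** A t" "u t = r *\<^sub>R (W *v n t)"
      unfolding noslip_def n_def by auto
    have AA: "A t ** transpose (A t) = mat 1" using SO3[OF t] unfolding orthogonal_matrix_def by simp
    have "U t = W"
    proof -
      have "U t = (U t ** A t) ** transpose (A t)" by (simp add: AA flip: matrix_mul_assoc)
      also have "\<dots> = W" unfolding W(2) by (simp add: AA flip: matrix_mul_assoc)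
      finally show ?thesis .
    qed
    then show ?thesis using W skew_apply angvel_skew unfolding w_def by simp
  qed
  have wv: "w t = vecof (U t)" if "t \<in> J" for t using skU[OF that] angvel_skew unfolding w_def by simp
  have bl: "bounded_linear vecof" using linear_vecof linear_conv_bounded_linear by blast
  have dw: "(w has_vector_derivative w' t) (at t)" if t: "t \<in> J" for t
  proof -
    have "((\<lambda>s. vecof (U s)) has_vector_derivative vecof (U' t)) (at t)"
      by (rule bounded_linear.has_vector_derivative[OF bl dU[OF t]])
    then show ?thesis unfolding w'_def
      by (rule has_vector_derivative_transform_within_open[OF _ J(1) t]) (simp add: wv)
  qed
  have dn: "(n has_vector_derivative n' t) (at t)" if t: "t \<in> J" for t
  proof -
    have "((\<lambda>s. unorm Phi (a s)) has_derivative (\<lambda>h. Lop Phi DPhi (a t) (h *\<^sub>R u t))) (at t)"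
      by (rule has_derivative_compose[OF da[OF t, unfolded has_vector_derivative_def] unorm_deriv[where Phi=Phi and x="a t" and DPhi=DPhi, OF nz[OF t] hess]])
    then show ?thesis unfolding n_def n'_def has_vector_derivative_def Lop_scale .
  qed
  have Bc: "bounded_bilinear cross3" using bilinear_cross bilinear_conv_bounded_bilinear by blast
  have u'eq: "u' t = r *\<^sub>R (cross3 (w t) (n' t) + cross3 (w' t) (n t))" if t: "t \<in> J" for t
  proof -
    have "((\<lambda>s. cross3 (w s) (n s)) has_vector_derivative (cross3 (w t) (n' t) + cross3 (w' t) (n t))) (at t)"
      by (rule bounded_bilinear.has_vector_derivative[OF Bc dw[OF t] dn[OF t]])
    then have "((\<lambda>s. r *\<^sub>R cross3 (w s) (n s)) has_vector_derivative r *\<^sub>R (cross3 (w t) (n' t) + cross3 (w' t) (n t))) (at t)"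
      by (rule bounded_linear.has_vector_derivative[OF bounded_linear_scaleR_right])
    then have "(u has_vector_derivative r *\<^sub>R (cross3 (w t) (n' t) + cross3 (w' t) (n t))) (at t)"
      by (rule has_vector_derivative_transform_within_open[OF _ J(1) t]) (simp add: skU)
    then show ?thesis using vector_derivative_unique_at du[OF t] by blast
  qed
  have K: "r * \<gamma>\<^sup>2 * (w' t \<bullet> x) + (u' t + g *\<^sub>R e) \<bullet> cross3 x (n t) = 0" if t: "t \<in> J" for t x
  proof -
    define z where "z = (skewmat x ** A t, r *\<^sub>R (skewmat x *v n t))"
    have zin: "z \<in> noslip Phi r (A t) (a t)"
      unfolding noslip_def tangentM_def z_def n_def
      using skew_skewmat[of x] by (auto simp: skewmat_apply dot_cross_self)
    have "kin_metric m r \<gamma> (U' t ** A t - 0, covD Phi (a t) (u' t) - (- g *\<^sub>R e)) z = 0"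
      using newton[OF t] zin unfolding noslip_perp_def by auto
    moreover have AA: "A t ** transpose (A t) = mat 1" using SO3[OF t] unfolding orthogonal_matrix_def by simp
    have tr: "trace ((U' t ** A t) ** transpose (skewmat x ** A t)) = 2 * (w' t \<bullet> x)"
    proof -
      have "(U' t ** A t) ** transpose (skewmat x ** A t) = U' t ** transpose (skewmat x)"
        by (simp add: matrix_transpose_mul matrix_mul_assoc AA flip: matrix_mul_assoc[of "U' t"])
      then show ?thesis by (simp add: trace_skewmat w'_def)
    qed
    have ip: "(covD Phi (a t) (u' t) - (- g *\<^sub>R e)) \<bullet> (r *\<^sub>R (skewmat x *v n t))
        = r * ((u' t + g *\<^sub>R e) \<bullet> cross3 x (n t))"
      unfolding covD_def skewmat_apply n_def
      by (simp add: inner_diff_left inner_add_left dot_cross_self algebra_simps)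
    ultimately have "m * ((r * \<gamma>)\<^sup>2 / 2 * trace ((U' t ** A t) ** transpose (skewmat x ** A t))
       + (covD Phi (a t) (u' t) - (- g *\<^sub>R e)) \<bullet> (r *\<^sub>R (skewmat x *v n t))) = 0"
      unfolding kin_metric_def z_def by (simp only: fst_conv snd_conv diff_zero)
    then have "m * ((r * \<gamma>)\<^sup>2 / 2 * (2 * (w' t \<bullet> x)) + r * ((u' t + g *\<^sub>R e) \<bullet> cross3 x (n t))) = 0"
      unfolding tr ip .
    then have "m * r * (r * \<gamma>\<^sup>2 * (w' t \<bullet> x) + (u' t + g *\<^sub>R e) \<bullet> cross3 x (n t)) = 0"
      by (simp add: power2_eq_square algebra_simps)
    then show ?thesis using m r by simp
  qed
  have facts: "w' t \<bullet> e = 0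
     \<and> u' t \<bullet> e = - (\<gamma>\<^sup>2 / (1 + \<gamma>\<^sup>2) * r\<^sup>2 * lam t * (w t \<bullet> e) * (w t \<bullet> n t) + g / (1 + \<gamma>\<^sup>2))
     \<and> w t \<bullet> n' t + w' t \<bullet> n t = lam t * (w t \<bullet> e) * (u t \<bullet> e)" if t: "t \<in> J" for t
  proof -
    have uu: "u t = r *\<^sub>R cross3 (w t) (n t)" using skU[OF t] by simp
    have un: "u t \<bullet> unorm Phi (a t) = 0" unfolding uu n_def by (simp add: dot_cross_self)
    have N': "n' t = - (lam t * (u t \<bullet> cross3 (n t) e)) *\<^sub>R cross3 (n t) e"
      unfolding n'_def lam_def n_def using Lop_tangent[OF grad cyl hess e nz[OF t] un]
      by (simp add: tau_dir_def)
    note A = alg[OF nn[OF t] ee ne[OF t] r \<gamma> uu N' u'eq[OF t] K[OF t]]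
    show ?thesis using A by blast
  qed
  have dre: "((\<lambda>s. w s \<bullet> e) has_real_derivative (w' t \<bullet> e)) (at t)" if t: "t \<in> J" for t
    unfolding has_real_derivative_iff_has_vector_derivative
    by (rule bounded_linear.has_vector_derivative[OF bounded_linear_inner_left dw[OF t]])
  have drn: "((\<lambda>s. w s \<bullet> n s) has_real_derivative (w t \<bullet> n' t + w' t \<bullet> n t)) (at t)" if t: "t \<in> J" for t
    unfolding has_real_derivative_iff_has_vector_derivative
    by (rule bounded_bilinear.has_vector_derivative[OF bounded_bilinear_inner dw[OF t] dn[OF t]])
  have due: "((\<lambda>s. u s \<bullet> e) has_real_derivative (u' t \<bullet> e)) (at t)" if t: "t \<in> J" for t
    unfolding has_real_derivative_iff_has_vector_derivative
    by (rule bounded_linear.has_vector_derivative[OF bounded_linear_inner_left du[OF t]])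
  have dae: "((\<lambda>s. a s \<bullet> e) has_real_derivative (u t \<bullet> e)) (at t)" if t: "t \<in> J" for t
    unfolding has_real_derivative_iff_has_vector_derivative
    by (rule bounded_linear.has_vector_derivative[OF bounded_linear_inner_left da[OF t]])
  have const: "\<exists>c. \<forall>x\<in>J. w x \<bullet> e = c"
    by (rule has_field_derivative_zero_constant[OF is_interval_convex[OF J(2)]])
       (metis dre facts has_field_derivative_at_within)
  then have we: "w s \<bullet> e = w 0 \<bullet> e" if "s \<in> J" for s using that J(3) by metis
  have P1': "\<forall>s\<in>J. \<forall>t\<in>J. angvel (U s) \<bullet> e = angvel (U t) \<bullet> e"
    using we unfolding w_def by metis
  have P2': "\<forall>t\<in>J.
         ((\<lambda>t. u t \<bullet> e) has_real_derivative
            - (\<gamma>\<^sup>2 / (1 + \<gamma>\<^sup>2) * r\<^sup>2 * curv Phi e (a t) * (angvel (U t) \<bullet> e)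
                 * (angvel (U t) \<bullet> unorm Phi (a t)) + g / (1 + \<gamma>\<^sup>2))) (at t)
       \<and> ((\<lambda>t. angvel (U t) \<bullet> unorm Phi (a t)) has_real_derivative
            curv Phi e (a t) * (angvel (U t) \<bullet> e) * (u t \<bullet> e)) (at t)"
  proof
    fix t assume t: "t \<in> J"
    show "((\<lambda>t. u t \<bullet> e) has_real_derivative
            - (\<gamma>\<^sup>2 / (1 + \<gamma>\<^sup>2) * r\<^sup>2 * curv Phi e (a t) * (angvel (U t) \<bullet> e)
                 * (angvel (U t) \<bullet> unorm Phi (a t)) + g / (1 + \<gamma>\<^sup>2))) (at t)
       \<and> ((\<lambda>t. angvel (U t) \<bullet> unorm Phi (a t)) has_real_derivative
            curv Phi e (a t) * (angvel (U t) \<bullet> e) * (u t \<bullet> e)) (at t)"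
      using due[OF t] drn[OF t] facts[OF t] unfolding w_def n_def lam_def by simp
  qed
  have cPhi: "continuous_on UNIV Phi"
    by (metis continuous_at_imp_continuous_on has_derivative_continuous hess)
  have ca: "continuous_on J a"
    by (metis continuous_at_imp_continuous_on has_vector_derivative_continuous da)
  have cu: "continuous_on J u"
    by (metis continuous_at_imp_continuous_on has_vector_derivative_continuous du)
  have cP: "continuous_on J (\<lambda>s. Phi (a s))" by (rule continuous_on_compose2[OF cPhi ca]) auto
  have cD: "continuous_on J (\<lambda>s. DPhi (a s))" by (rule continuous_on_compose2[OF hess_cont ca]) auto
  have nzJ: "\<forall>s\<in>J. norm (Phi (a s)) \<noteq> 0" using nz by simp
  have cn: "continuous_on J (\<lambda>s. unorm Phi (a s))"
    unfolding unorm_def using cP nzJ by (auto intro!: continuous_intros)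
  have ct: "continuous_on J (\<lambda>s. tau_dir Phi e (a s))"
    unfolding tau_dir_def by (intro continuous_on_cross cn continuous_on_const)
  have cDt: "continuous_on J (\<lambda>s. blinfun_apply (DPhi (a s)) (tau_dir Phi e (a s)))"
    by (rule blinfun.continuous_on[OF cD ct])
  have cL: "continuous_on J (\<lambda>s. - (Lop Phi DPhi (a s) (tau_dir Phi e (a s)) \<bullet> tau_dir Phi e (a s)))"
    unfolding Lop_def using cP nzJ cDt ct by (auto intro!: continuous_intros)
  have clam: "continuous_on J lam"
    using cL by (rule continuous_on_cong[THEN iffD1, rotated 2]) (auto simp: lam_def curv_Lop[OF grad cyl hess e nz])
  have cf: "continuous_on J (\<lambda>s. lam s * (u s \<bullet> e))"
    using clam cu by (auto intro!: continuous_intros)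
  have integ: "w t \<bullet> n t = w 0 \<bullet> n 0 + (w 0 \<bullet> e) * (LBINT s=0..t. lam s * (u s \<bullet> e))" if t: "t \<in> J" for t
  proof (cases "w 0 \<bullet> e = 0")
    case True
    have "((\<lambda>s. w s \<bullet> n s) has_real_derivative 0) (at s within J)" if "s \<in> J" for s
      using drn[OF that] facts[OF that] we[OF that] True by (simp add: has_field_derivative_at_within)
    then obtain c where "\<forall>x\<in>J. w x \<bullet> n x = c"
      using has_field_derivative_zero_constant[OF is_interval_convex[OF J(2)]] by metis
    then show ?thesis using True t J(3) by simp
  next
    case False
    define c where "c = w 0 \<bullet> e"
    have sub: "{min 0 t..max 0 t} \<subseteq> J"
    proof
      fix x assume x: "x \<in> {min 0 t..max 0 t}"
      show "x \<in> J"
      proof (cases "0 \<le> t")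
        case True then show ?thesis using x mem_is_interval_1_I[OF J(2) J(3) t, of x] by simp
      next
        case False then show ?thesis using x mem_is_interval_1_I[OF J(2) t J(3), of x] by simp
      qed
    qed
    have "interval_lebesgue_integral lborel (ereal 0) (ereal t) (\<lambda>s. lam s * (u s \<bullet> e)) = (w t \<bullet> n t) / c - (w 0 \<bullet> n 0) / c"
    proof (rule interval_integral_FTC_finite[where F="\<lambda>s. (w s \<bullet> n s) / c" and f="\<lambda>s. lam s * (u s \<bullet> e)"])
      show "continuous_on {min 0 t..max 0 t} (\<lambda>s. lam s * (u s \<bullet> e))"
        using cf sub continuous_on_subset by blast
      fix x assume "min 0 t \<le> x" "x \<le> max 0 t"
      then have x: "x \<in> J" using sub by auto
      have "((\<lambda>s. (w s \<bullet> n s) / c) has_real_derivative (w x \<bullet> n' x + w' x \<bullet> n x) / c) (at x)"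
        by (rule DERIV_cdivide[OF drn[OF x]])
      moreover have "(w x \<bullet> n' x + w' x \<bullet> n x) / c = lam x * (u x \<bullet> e)"
        using facts[OF x] we[OF x] False unfolding c_def by simp
      ultimately show "((\<lambda>s. (w s \<bullet> n s) / c) has_vector_derivative lam x * (u x \<bullet> e)) (at x within {min 0 t..max 0 t})"
        by (simp add: has_real_derivative_iff_has_vector_derivative[symmetric] has_field_derivative_at_within)
    qed
    then have "(LBINT s=0..t. lam s * (u s \<bullet> e)) = (w t \<bullet> n t) / c - (w 0 \<bullet> n 0) / c"
      by (metis zero_ereal_def)
    then have "c * (LBINT s=0..t. lam s * (u s \<bullet> e)) = w t \<bullet> n t - w 0 \<bullet> n 0"
      using False unfolding c_def by (simp add: right_diff_distrib)
    then show ?thesis unfolding c_def by linarith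
  qed
  have P3': "\<forall>t\<in>J.
         ((\<lambda>t. a t \<bullet> e) has_real_derivative (u t \<bullet> e)) (at t)
       \<and> ((\<lambda>t. u t \<bullet> e) has_real_derivative
            - (\<gamma>\<^sup>2 / (1 + \<gamma>\<^sup>2) * r\<^sup>2 * curv Phi e (a t) * (angvel (U 0) \<bullet> e)
                 * ((angvel (U 0) \<bullet> unorm Phi (a 0))
                    + (angvel (U 0) \<bullet> e) * (LBINT s=0..t. curv Phi e (a s) * (u s \<bullet> e)))
               + g / (1 + \<gamma>\<^sup>2))) (at t)"
  proof
    fix t assume t: "t \<in> J"
    have "u' t \<bullet> e = - (\<gamma>\<^sup>2 / (1 + \<gamma>\<^sup>2) * r\<^sup>2 * lam t * (w 0 \<bullet> e)
                 * ((w 0 \<bullet> n 0) + (w 0 \<bullet> e) * (LBINT s=0..t. lam s * (u s \<bullet> e))) + g / (1 + \<gamma>\<^sup>2))"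
      using facts[OF t] we[OF t] integ[OF t] by simp
    then show "((\<lambda>t. a t \<bullet> e) has_real_derivative (u t \<bullet> e)) (at t)
       \<and> ((\<lambda>t. u t \<bullet> e) has_real_derivative
            - (\<gamma>\<^sup>2 / (1 + \<gamma>\<^sup>2) * r\<^sup>2 * curv Phi e (a t) * (angvel (U 0) \<bullet> e)
                 * ((angvel (U 0) \<bullet> unorm Phi (a 0))
                    + (angvel (U 0) \<bullet> e) * (LBINT s=0..t. curv Phi e (a s) * (u s \<bullet> e)))
               + g / (1 + \<gamma>\<^sup>2))) (at t)"
      using dae[OF t] due[OF t] unfolding w_def n_def lam_def by simp
  qed
  show ?thesis using P1' P2' P3' by blast
qed

end
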